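(* Let $G=(V,E)$ be a transitive and finite directed graph with in-degree at least $2$ at every vertex, and let $v\in V$ have in-degree $d_v\ge3$. Then the $v$-lag $\widehat{G}_v$ (for any choice of ordering of incoming edges) is a finite transitive directed graph with in-degree at least $2$ at every vertex, and it has one fewer vertex of in-degree at least $3$ than $G$.
   Context: A directed graph $G=(V,E,r,s)$; in-degree of $v$ is $|r^{-1}(v)|$; a path $e_1\cdots e_n$ has $s(e_i)=r(e_{i+1})$, and "an edge from $u$ to $w$" has source $u$ and range $w$; $G$ is transitive if there is a path between any two vertices. The $v$-lag $\widehat{G}_v=(\widehat{V}_v,\widehat{E}_v)$ of $G$ at a vertex $v$ of in-degree $d_v\ge3$: enumerate the edges with range $v$ as $e_0,\dots,e_{d_v-1}$, with sources $u_0,\dots,u_{d_v-1}$ (repetitions allowed). Keep all vertices of $G$ and all edges not ranging in $v$. Add new vertices $v_1,\dots,v_{d_v-2}$, an edge $f_1$ from $v_1$ to $v$, and edges $f_i$ from $v_i$ to $v_{i-1}$ for $2\le i\le d_v-2$. Replace $e_0$ by an edge $\hat e_0$ from $u_0$ to $v$; replace $e_j$ by an edge $\hat e_j$ from $u_j$ to $v_j$ for $1\le j\le d_v-2$; replace $e_{d_v-1}$ by an edge $\hat e_{d_v-1}$ from $u_{d_v-1}$ to $v_{d_v-2}$. Thus $\widehat{V}_v=V\sqcup\{v_1,\dots,v_{d_v-2}\}$. *)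

theory Defs
  imports Main
begin

text \<open>A directed (multi)graph is given by a vertex set V, an edge set E, and
range / source maps r, s on edges.  An edge e goes from s e to r e.\<close>

definition digraph :: "'v set \<Rightarrow> 'e set \<Rightarrow> ('e \<Rightarrow> 'v) \<Rightarrow> ('e \<Rightarrow> 'v) \<Rightarrow> bool" where
  "digraph V E r s \<longleftrightarrow> (\<forall>e\<in>E. r e \<in> V \<and> s e \<in> V)"

definition in_degree :: "'e set \<Rightarrow> ('e \<Rightarrow> 'v) \<Rightarrow> 'v \<Rightarrow> nat" where
  "in_degree E r v = card {e \<in> E. r e = v}"

text \<open>Paths
e_1...e_n with s(e_i) = r(e_{i+1}) from u = s(e_n) to w = r(e_1) correspond to
the reflexive-transitive closure (length-0 paths being vertices).\<close>

definition edge_rel :: "'e set \<Rightarrow> ('e \<Rightarrow> 'v) \<Rightarrow> ('e \<Rightarrow> 'v) \<Rightarrow> ('v \<times> 'v) set" where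
  "edge_rel E r s = {(s e, r e) | e. e \<in> E}"

definition transitive_graph :: "'v set \<Rightarrow> 'e set \<Rightarrow> ('e \<Rightarrow> 'v) \<Rightarrow> ('e \<Rightarrow> 'v) \<Rightarrow> bool" where
  "transitive_graph V E r s \<longleftrightarrow> (\<forall>u\<in>V. \<forall>w\<in>V. (u, w) \<in> (edge_rel E r s)\<^sup>*)"

text \<open>The ordering of the incoming edges of v is a bijection
  ord from {0..<d_v} onto r^{-1}(v) (ord j = e_j).
  New vertices v_i are Inr i (1 \<le> i \<le> d_v - 2); old vertices are Inl u.
  New edges f_i are Inr i (1 \<le> i \<le> d_v - 2); each old edge e (including the
  replaced ones \<hat>e_j) is Inl e.\<close>

definition lag_V :: "'v set \<Rightarrow> 'e set \<Rightarrow> ('e \<Rightarrow> 'v) \<Rightarrow> 'v \<Rightarrow> ('v + nat) set" where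
  "lag_V V E r v = Inl ` V \<union> Inr ` {1 .. in_degree E r v - 2}"

definition lag_E :: "'e set \<Rightarrow> ('e \<Rightarrow> 'v) \<Rightarrow> 'v \<Rightarrow> ('e + nat) set" where
  "lag_E E r v = Inl ` E \<union> Inr ` {1 .. in_degree E r v - 2}"

definition lag_s :: "('e \<Rightarrow> 'v) \<Rightarrow> ('e + nat) \<Rightarrow> ('v + nat)" where
  "lag_s s x = (case x of Inl e \<Rightarrow> Inl (s e) | Inr i \<Rightarrow> Inr i)"

definition lag_r :: "'e set \<Rightarrow> ('e \<Rightarrow> 'v) \<Rightarrow> 'v \<Rightarrow> (nat \<Rightarrow> 'e) \<Rightarrow> ('e + nat) \<Rightarrow> ('v + nat)" where
  "lag_r E r v ord x = (case x of
      Inl e \<Rightarrow>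
        (if e \<in> E \<and> r e = v then
           (let d = in_degree E r v; j = the_inv_into {0..<d} ord e in
              if j = 0 then Inl v
              else if j \<le> d - 2 then Inr j
              else Inr (d - 2))
         else Inl (r e))
    | Inr i \<Rightarrow> (if i = 1 then Inl v else Inr (i - 1)))"

end

theory Submission
  imports Defs
begin

lemma edge_in_rel: "x \<in> E \<Longrightarrow> (s x, r x) \<in> edge_rel E r s"
  unfolding edge_rel_def by blast

theorem lemma3p6:
  fixes V :: "'v set" and E :: "'e set" and r s :: "'e \<Rightarrow> 'v"
    and v :: 'v and ord :: "nat \<Rightarrow> 'e"
  assumes "digraph V E r s"
    and "finite V" and "finite E"
    and "transitive_graph V E r s"
    and "\<forall>u\<in>V. in_degree E r u \<ge> 2"
    and "v \<in> V" and "in_degree E r v \<ge> 3"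
    and "bij_betw ord {0..<in_degree E r v} {e \<in> E. r e = v}"
  shows "digraph (lag_V V E r v) (lag_E E r v) (lag_r E r v ord) (lag_s s)
    \<and> finite (lag_V V E r v) \<and> finite (lag_E E r v)
    \<and> transitive_graph (lag_V V E r v) (lag_E E r v) (lag_r E r v ord) (lag_s s)
    \<and> (\<forall>u\<in>lag_V V E r v. in_degree (lag_E E r v) (lag_r E r v ord) u \<ge> 2)
    \<and> card {u \<in> lag_V V E r v. in_degree (lag_E E r v) (lag_r E r v ord) u \<ge> 3} + 1
      = card {u \<in> V. in_degree E r u \<ge> 3}"
proof -
  define d where "d = in_degree E r v"
  define R where "R = lag_r E r v ord"
  define LE where "LE = lag_E E r v"
  define LV where "LV = lag_V V E r v"
  define S where "S = lag_s s"
  have d3: "d \<ge> 3" using assms(7) d_def by simp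
  have bij: "bij_betw ord {0..<d} {e \<in> E. r e = v}" using assms(8) d_def by simp
  have inj: "inj_on ord {0..<d}" using bij bij_betw_imp_inj_on by blast
  have ordE: "j < d \<Longrightarrow> ord j \<in> E \<and> r (ord j) = v" for j
    using bij unfolding bij_betw_def by auto
  have ordsurj: "e \<in> E \<Longrightarrow> r e = v \<Longrightarrow> \<exists>j<d. e = ord j" for e
  proof -
    assume "e \<in> E" "r e = v"
    then have "e \<in> ord ` {0..<d}" using bij unfolding bij_betw_def by blast
    then show ?thesis by auto
  qed
  have R_ord: "j < d \<Longrightarrow> R (Inl (ord j)) = (if j = 0 then Inl v else if j \<le> d-2 then Inr j else Inr (d-2))" for j
  proof -
    assume j: "j < d"
    have "the_inv_into {0..<d} ord (ord j) = j" using the_inv_into_f_f[OF inj] j by simp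
    then show ?thesis using ordE[OF j] unfolding R_def lag_r_def Let_def d_def[symmetric] by simp
  qed
  have R_oth: "r e \<noteq> v \<Longrightarrow> R (Inl e) = Inl (r e)" for e
    unfolding R_def lag_r_def by simp
  have R_Inr: "R (Inr i) = (if i = 1 then Inl v else Inr (i - 1))" for i
    unfolding R_def lag_r_def by simp
  have S_Inl: "S (Inl e) = Inl (s e)" for e unfolding S_def lag_s_def by simp
  have S_Inr: "S (Inr i) = Inr i" for i unfolding S_def lag_s_def by simp
  have LE_eq: "LE = Inl ` E \<union> Inr ` {1..d-2}" unfolding LE_def lag_E_def d_def by simp
  have LV_eq: "LV = Inl ` V \<union> Inr ` {1..d-2}" unfolding LV_def lag_V_def d_def by simp
  have dg: "digraph V E r s" by fact
  have sV: "e \<in> E \<Longrightarrow> s e \<in> V \<and> r e \<in> V" for e using dg unfolding digraph_def by blast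
  have G1: "digraph LV LE R S"
    unfolding digraph_def
  proof
    fix x assume x: "x \<in> LE"
    show "R x \<in> LV \<and> S x \<in> LV"
    proof (cases x)
      case (Inl e)
      then have e: "e \<in> E" using x LE_eq by auto
      have "R x \<in> LV"
      proof (cases "r e = v")
        case True
        then obtain j where j: "j < d" "e = ord j" using ordsurj e by blast
        then show ?thesis using R_ord[OF j(1)] Inl LV_eq d3 assms(6) by auto
      next
        case False then show ?thesis using R_oth Inl LV_eq sV[OF e] by auto
      qed
      then show ?thesis using Inl S_Inl LV_eq sV[OF e] by auto
    next
      case (Inr i)
      then have "i \<in> {1..d-2}" using x LE_eq by auto
      then have "i - 1 \<in> {1..d-2} \<or> i = 1" by auto
      then show ?thesis using Inr R_Inr S_Inr LV_eq assms(6) \<open>i \<in> {1..d-2}\<close> by auto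
    qed
  qed
  have G2: "finite LV" "finite LE" using LV_eq LE_eq assms(2,3) by auto
  let ?rel = "(edge_rel LE R S)\<^sup>*"
  have A: "i \<in> {1..d-2} \<Longrightarrow> (Inr i, Inl v) \<in> ?rel" for i
  proof (induction i)
    case 0 then show ?case by simp
  next
    case (Suc k)
    have m: "Inr (Suc k) \<in> LE" using Suc.prems LE_eq by auto
    have step: "(Inr (Suc k), R (Inr (Suc k))) \<in> edge_rel LE R S"
      using edge_in_rel[OF m, of S R] S_Inr by simp
    show ?case
    proof (cases "k = 0")
      case True then show ?thesis using step R_Inr by auto
    next
      case False
      then have "(Inr k, Inl v) \<in> ?rel" using Suc by auto
      moreover have "(Inr (Suc k), Inr k) \<in> edge_rel LE R S" using step R_Inr False by simp
      ultimately show ?thesis by (meson converse_rtrancl_into_rtrancl)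
    qed
  qed
  have B: "e \<in> E \<Longrightarrow> (Inl (s e), Inl (r e)) \<in> ?rel" for e
  proof -
    assume e: "e \<in> E"
    have m: "Inl e \<in> LE" using e LE_eq by auto
    have step: "(Inl (s e), R (Inl e)) \<in> edge_rel LE R S"
      using edge_in_rel[OF m, of S R] S_Inl by simp
    show ?thesis
    proof (cases "r e = v")
      case False then show ?thesis using step R_oth by auto
    next
      case True
      then obtain j where j: "j < d" "e = ord j" using ordsurj e by blast
      show ?thesis
      proof (cases "j = 0")
        case True then show ?thesis using step R_ord[OF j(1)] j \<open>r e = v\<close> by auto
      next
        case False
        define k where "k = (if j \<le> d-2 then j else d-2)"
        have k: "k \<in> {1..d-2}" using False d3 k_def by auto
        have "R (Inl e) = Inr k" using R_ord[OF j(1)] j False k_def by auto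
        then show ?thesis using step A[OF k] \<open>r e = v\<close>
          by (metis converse_rtrancl_into_rtrancl)
      qed
    qed
  qed
  have C: "(u, w) \<in> (edge_rel E r s)\<^sup>* \<Longrightarrow> (Inl u, Inl w) \<in> ?rel" for u w
  proof (induction rule: rtrancl_induct)
    case base then show ?case by simp
  next
    case (step y z)
    then obtain e where "e \<in> E" "y = s e" "z = r e" unfolding edge_rel_def by blast
    then show ?case using B step.IH by (metis rtrancl_trans)
  qed
  have D: "j \<in> {1..d-2} \<Longrightarrow> (Inl (s (ord j)), Inr j) \<in> ?rel" for j
  proof -
    assume j: "j \<in> {1..d-2}"
    then have jd: "j < d" using d3 by auto
    have m: "Inl (ord j) \<in> LE" using ordE[OF jd] LE_eq by auto
    show ?thesis using edge_in_rel[OF m, of S R] S_Inl R_ord[OF jd] j by auto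
  qed
  have tr: "transitive_graph V E r s" by fact
  have Cv: "u \<in> V \<Longrightarrow> w \<in> V \<Longrightarrow> (Inl u, Inl w) \<in> ?rel" for u w
    using C tr unfolding transitive_graph_def by blast
  have toOld: "x \<in> LV \<Longrightarrow> \<exists>u\<in>V. (x, Inl u) \<in> ?rel" for x
  proof -
    assume x: "x \<in> LV"
    then show ?thesis
    proof (cases x)
      case (Inl u) then show ?thesis using x LV_eq by auto
    next
      case (Inr i) then have "i \<in> {1..d-2}" using x LV_eq by auto
      then show ?thesis using A assms(6) Inr by blast
    qed
  qed
  have fromOld: "y \<in> LV \<Longrightarrow> \<exists>u\<in>V. (Inl u, y) \<in> ?rel" for y
  proof -
    assume y: "y \<in> LV"
    then show ?thesis
    proof (cases y)
      case (Inl u) then show ?thesis using y LV_eq by auto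
    next
      case (Inr j)
      then have j: "j \<in> {1..d-2}" using y LV_eq by auto
      then have "j < d" using d3 by auto
      then have "s (ord j) \<in> V" using ordE sV by blast
      then show ?thesis using D[OF j] Inr by blast
    qed
  qed
  have G3: "transitive_graph LV LE R S"
    unfolding transitive_graph_def
  proof (intro ballI)
    fix x y assume x: "x \<in> LV" and y: "y \<in> LV"
    obtain u where u: "u \<in> V" "(x, Inl u) \<in> ?rel" using toOld[OF x] by blast
    obtain w where w: "w \<in> V" "(Inl w, y) \<in> ?rel" using fromOld[OF y] by blast
    show "(x, y) \<in> ?rel" using u w Cv by (meson rtrancl_trans)
  qed
  have deg_old: "u \<noteq> v \<Longrightarrow> in_degree LE R (Inl u) = in_degree E r u" for u
  proof -
    assume uv: "u \<noteq> v"
    have "{x \<in> LE. R x = Inl u} = Inl ` {e \<in> E. r e = u}"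
    proof (intro equalityI subsetI)
      fix x assume x: "x \<in> {x \<in> LE. R x = Inl u}"
      then show "x \<in> Inl ` {e \<in> E. r e = u}"
      proof (cases x)
        case (Inl e)
        then have e: "e \<in> E" using x LE_eq by auto
        show ?thesis
        proof (cases "r e = v")
          case True
          then obtain j where j: "j < d" "e = ord j" using ordsurj e by blast
          then show ?thesis using R_ord[OF j(1)] x Inl uv by (auto split: if_splits)
        next
          case False then show ?thesis using x Inl R_oth e by auto
        qed
      next
        case (Inr i) then show ?thesis using x R_Inr uv by (auto split: if_splits)
      qed
    next
      fix x :: "'e + nat" assume "x \<in> Inl ` {e \<in> E. r e = u}"
      then show "x \<in> {x \<in> LE. R x = Inl u}" using LE_eq R_oth uv by auto
    qed
    then show ?thesis unfolding in_degree_def by (simp add: card_image)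
  qed
  have deg_v: "in_degree LE R (Inl v) = 2"
  proof -
    have "{x \<in> LE. R x = Inl v} = {Inl (ord 0), Inr 1}"
    proof (intro equalityI subsetI)
      fix x assume x: "x \<in> {x \<in> LE. R x = Inl v}"
      then show "x \<in> {Inl (ord 0), Inr 1}"
      proof (cases x)
        case (Inl e)
        then have e: "e \<in> E" using x LE_eq by auto
        show ?thesis
        proof (cases "r e = v")
          case True
          then obtain j where j: "j < d" "e = ord j" using ordsurj e by blast
          then show ?thesis using R_ord[OF j(1)] x Inl by (auto split: if_splits)
        next
          case False then show ?thesis using x Inl R_oth e by auto
        qed
      next
        case (Inr i) then show ?thesis using x R_Inr by (auto split: if_splits)
      qed
    next
      fix x :: "'e + nat" assume "x \<in> {Inl (ord 0), Inr 1}"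
      then show "x \<in> {x \<in> LE. R x = Inl v}" using LE_eq R_Inr R_ord[of 0] ordE[of 0] d3 by auto
    qed
    then show ?thesis unfolding in_degree_def by simp
  qed
  have deg_new: "j \<in> {1..d-2} \<Longrightarrow> in_degree LE R (Inr j) = 2" for j
  proof -
    assume j: "j \<in> {1..d-2}"
    have sub: "{x \<in> LE. R x = Inr j} = Inl ` ord ` {k \<in> {0..<d}. R (Inl (ord k)) = Inr j} \<union> Inr ` {i \<in> {1..d-2}. R (Inr i) = Inr j}"
    proof (intro equalityI subsetI)
      fix x assume x: "x \<in> {x \<in> LE. R x = Inr j}"
      then show "x \<in> Inl ` ord ` {k \<in> {0..<d}. R (Inl (ord k)) = Inr j} \<union> Inr ` {i \<in> {1..d-2}. R (Inr i) = Inr j}"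
      proof (cases x)
        case (Inl e)
        then have e: "e \<in> E" using x LE_eq by auto
        show ?thesis
        proof (cases "r e = v")
          case True
          then obtain k where k: "k < d" "e = ord k" using ordsurj e by blast
          then show ?thesis using x Inl by auto
        next
          case False then show ?thesis using x Inl R_oth e by auto
        qed
      next
        case (Inr i) then show ?thesis using x LE_eq by auto
      qed
    next
      fix x :: "'e + nat" assume "x \<in> Inl ` ord ` {k \<in> {0..<d}. R (Inl (ord k)) = Inr j} \<union> Inr ` {i \<in> {1..d-2}. R (Inr i) = Inr j}"
      then show "x \<in> {x \<in> LE. R x = Inr j}" using LE_eq ordE by auto
    qed
    show ?thesis
    proof (cases "j < d - 2")
      case True
      have "{k \<in> {0..<d}. R (Inl (ord k)) = Inr j} = {j}"
        using R_ord j True by (auto split: if_splits)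
      moreover have "{i \<in> {1..d-2}. R (Inr i) = Inr j} = {j+1}"
        using R_Inr j True by (auto split: if_splits)
      ultimately have "{x \<in> LE. R x = Inr j} = {Inl (ord j), Inr (j+1)}" using sub by (simp add: insert_commute)
      then show ?thesis unfolding in_degree_def by simp
    next
      case False
      then have jd: "j = d - 2" using j by auto
      have h1: "{k \<in> {0..<d}. R (Inl (ord k)) = Inr j} = {d-2, d-1}"
        using R_ord jd d3 by (auto split: if_splits)
      have h2: "{i \<in> {1..d-2}. R (Inr i) = Inr j} = {}"
        using R_Inr jd by (auto split: if_splits)
      have "{x \<in> LE. R x = Inr j} = {Inl (ord (d-2)), Inl (ord (d-1))}" unfolding sub h1 h2 by simp
      moreover have "ord (d-2) \<noteq> ord (d-1)"
      proof
        assume "ord (d-2) = ord (d-1)"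
        moreover have "d-2 \<in> {0..<d}" "d-1 \<in> {0..<d}" using d3 by auto
        ultimately have "d-2 = d-1" using inj unfolding inj_on_def by blast
        then show False using d3 by simp
      qed
      ultimately show ?thesis unfolding in_degree_def by simp
    qed
  qed
  have G4: "\<forall>u\<in>LV. in_degree LE R u \<ge> 2"
  proof
    fix x assume x: "x \<in> LV"
    show "in_degree LE R x \<ge> 2"
    proof (cases x)
      case (Inl u)
      then show ?thesis using x LV_eq deg_old deg_v assms(5) by (cases "u = v") auto
    next
      case (Inr i) then show ?thesis using x LV_eq deg_new by auto
    qed
  qed
  have setL: "{u \<in> LV. in_degree LE R u \<ge> 3} = Inl ` {u \<in> V. u \<noteq> v \<and> in_degree E r u \<ge> 3}"
  proof (intro equalityI subsetI)
    fix x assume x: "x \<in> {u \<in> LV. in_degree LE R u \<ge> 3}"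
    show "x \<in> Inl ` {u \<in> V. u \<noteq> v \<and> in_degree E r u \<ge> 3}"
    proof (cases x)
      case (Inl u)
      then show ?thesis using x LV_eq deg_old deg_v by (cases "u = v") auto
    next
      case (Inr i) then show ?thesis using x LV_eq deg_new by auto
    qed
  next
    fix x :: "'v + nat" assume "x \<in> Inl ` {u \<in> V. u \<noteq> v \<and> in_degree E r u \<ge> 3}"
    then show "x \<in> {u \<in> LV. in_degree LE R u \<ge> 3}" using LV_eq deg_old by auto
  qed
  have setO: "{u \<in> V. in_degree E r u \<ge> 3} = insert v {u \<in> V. u \<noteq> v \<and> in_degree E r u \<ge> 3}"
    using assms(6,7) by auto
  have G5: "card {u \<in> LV. in_degree LE R u \<ge> 3} + 1 = card {u \<in> V. in_degree E r u \<ge> 3}"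
    unfolding setL setO using assms(2) by (simp add: card_image)
  show ?thesis using G1 G2 G3 G4 G5 unfolding LV_def LE_def R_def S_def by blast
qed

end
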